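(* Let $\sigma_{0}^{2}>0$, $C_{\mathrm{P}}>0$ and $\epsilon\in(0,1]$ be such that $H(\epsilon):=2\log\big(\tfrac{2}{C_{\mathrm{P}}\epsilon^{2}}\big)>0$. For $\bar{n},\bar{\sigma}>0$ let \[ G(\bar{n};\bar{\sigma}):=\frac{2}{C_{\mathrm{P}}}\exp\Big\{-\frac{1}{2\bar{\sigma}^{2}}\mathsf{W}^{2}\Big(\frac{C_{\mathrm{P}}\bar{n}\bar{\sigma}^{2}}{2\exp(\bar{\sigma}^{2}/2)}\Big)\Big\},\qquad\mathsf{B}(\bar{n},\bar{\sigma}):=\bar{n}\bar{N},\quad\bar{N}:=\sigma_{0}^{2}/\bar{\sigma}^{2}, \] where $\mathsf{W}$ is the Lambert W function on $[0,\infty)$ (inverse of $x\mapsto xe^{x}$) and $\mathsf{W}^{2}$ its square. Then the function $\mathsf{B}$ on $\mathbb{R}_{+}^{2}$, restricted to the constraint set $\{(\bar{n},\bar{\sigma}):G(\bar{n};\bar{\sigma})=\epsilon^{2}\}$, is minimized when \[ \bar{\sigma}=\bar{\sigma}_{\star}(\epsilon):=\frac{\sqrt{H(\epsilon)+12}-\sqrt{H(\epsilon)}}{2}, \] and $\lim_{H(\epsilon)\to\infty}\sqrt{H(\epsilon)}\,\bar{\sigma}_{\star}(\epsilon)=3$. Moreover, if $H(\epsilon)\ge1$, then taking $\bar{\sigma}(\epsilon)=3/\sqrt{H(\epsilon)}$ and $\bar{n}(\epsilon)$ such that $G(\bar{n}(\epsilon);\bar{\sigma}(\epsilon))=\epsilon^{2}$,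 one has \[ \bar{N}(\epsilon)=\frac{2}{9}\sigma_{0}^{2}\log\Big(\tfrac{2}{C_{\mathrm{P}}\epsilon^{2}}\Big),\quad\bar{n}(\epsilon)\le\frac{4\exp(15/2)}{3C_{\mathrm{P}}}\log\Big(\tfrac{2}{C_{\mathrm{P}}\epsilon^{2}}\Big),\quad\mathsf{B}(\epsilon)\le\frac{8\sigma_{0}^{2}\exp(15/2)}{27C_{\mathrm{P}}}\log\Big(\tfrac{2}{C_{\mathrm{P}}\epsilon^{2}}\Big)^{2}, \] where $\mathsf{B}(\epsilon):=\mathsf{B}(\bar{n}(\epsilon),\bar{\sigma}(\epsilon))$.
   Context: Interpretation (not needed for the statement): $G(n;\sigma)$ is an upper bound on the convergence rate $\|\tilde{P}^{n}f\|_{2}^{2}/\|f\|_{\mathrm{osc}}^{2}$ of a pseudo-marginal chain with lognormal weights $\log W\sim N(-\sigma^{2}/2,\sigma^{2})$ whose marginal chain has a strong Poincaré constant $C_{\mathrm{P}}$, with $\sigma^{2}=\sigma_{0}^{2}/N$ where $N$ is the number of particles. *)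

theory Defs
  imports "HOL-Analysis.Analysis"
begin

definition lambertW :: "real \<Rightarrow> real" where
  "lambertW y = (THE w. 0 \<le> w \<and> w * exp w = y)"

definition Gfun :: "real \<Rightarrow> real \<Rightarrow> real \<Rightarrow> real" where
  "Gfun CP n s = 2 / CP * exp (- (1 / (2 * s\<^sup>2)) * (lambertW (CP * n * s\<^sup>2 / (2 * exp (s\<^sup>2 / 2))))\<^sup>2)"

definition Nbar :: "real \<Rightarrow> real \<Rightarrow> real" where
  "Nbar \<sigma>0 s = \<sigma>0\<^sup>2 / s\<^sup>2"

definition Bfun :: "real \<Rightarrow> real \<Rightarrow> real \<Rightarrow> real" where
  "Bfun \<sigma>0 n s = n * Nbar \<sigma>0 s"

definition Hfun :: "real \<Rightarrow> real \<Rightarrow> real" where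
  "Hfun CP \<epsilon> = 2 * ln (2 / (CP * \<epsilon>\<^sup>2))"

text \<open>sigma_star as a function of the value h = H(eps).\<close>
definition sigma_star :: "real \<Rightarrow> real" where
  "sigma_star h = (sqrt (h + 12) - sqrt h) / 2"

end

theory Submission
  imports Defs "HOL-Real_Asymp.Real_Asymp"
begin

lemma xexp_strict_mono:
  fixes a b :: real
  assumes "0 \<le> a" "a < b"
  shows "a * exp a < b * exp b"
proof -
  have "a * exp a \<le> a * exp b" using assms by (simp add: mult_left_mono)
  also have "\<dots> < b * exp b" using assms by (simp add: mult_strict_right_mono)
  finally show ?thesis .
qed

lemma lambertW_eq:
  fixes w :: real
  assumes "0 \<le> w"
  shows "lambertW (w * exp w) = w"
  unfolding lambertW_def
proof (rule the_equality)
  show "0 \<le> w \<and> w * exp w = w * exp w" using assms by simp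
next
  fix v assume v: "0 \<le> v \<and> v * exp v = w * exp w"
  show "v = w"
  proof (rule ccontr)
    assume "v \<noteq> w"
    then have "v < w \<or> w < v" by linarith
    then show False using v assms xexp_strict_mono by fastforce
  qed
qed

lemma lambertW_ex:
  fixes y :: real
  assumes "0 \<le> y"
  shows "\<exists>w\<ge>0. w * exp w = y"
proof -
  have c: "continuous_on {0..y} (\<lambda>w. w * exp w)"
    by (intro continuous_intros)
  have "y \<le> y * exp y" using assms by (simp add: mult_le_cancel_left1)
  then obtain w where "w \<in> {0..y}" "w * exp w = y"
    using IVT'[of "\<lambda>w. w * exp w" 0 y y] c assms by auto
  then show ?thesis by auto
qed

lemma lambertW_prop:
  fixes y :: real
  assumes "0 \<le> y"
  shows "0 \<le> lambertW y \<and> lambertW y * exp (lambertW y) = y"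
proof -
  obtain w where "w \<ge> 0" "w * exp w = y" using lambertW_ex[OF assms] by auto
  then show ?thesis using lambertW_eq[of w] by auto
qed

definition nform :: "real \<Rightarrow> real \<Rightarrow> real \<Rightarrow> real" where
  "nform CP H s = 2 * exp (s\<^sup>2 / 2) * sqrt H * exp (s * sqrt H) / (CP * s)"

lemma G_iff:
  fixes CP \<epsilon> n s :: real
  assumes CP: "CP > 0" and e: "0 < \<epsilon>" and H: "Hfun CP \<epsilon> > 0" and n: "n > 0" and s: "s > 0"
  shows "Gfun CP n s = \<epsilon>\<^sup>2 \<longleftrightarrow> n = nform CP (Hfun CP \<epsilon>) s"
proof -
  define H where "H = Hfun CP \<epsilon>"
  define L where "L = ln (2 / (CP * \<epsilon>\<^sup>2))"
  have HL: "H = 2 * L" unfolding H_def L_def Hfun_def by simp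
  have Hp: "H > 0" using H H_def by simp
  have epos: "CP * \<epsilon>\<^sup>2 > 0" using CP e by simp
  have expL: "exp (- L) = CP * \<epsilon>\<^sup>2 / 2"
    unfolding L_def using epos CP e by (simp add: ln_div exp_diff)
  define y where "y = CP * n * s\<^sup>2 / (2 * exp (s\<^sup>2 / 2))"
  have yp: "y > 0" unfolding y_def using CP n s by simp
  define w where "w = lambertW y"
  have w: "0 \<le> w" "w * exp w = y" using lambertW_prop[of y] yp w_def by auto
  have G: "Gfun CP n s = 2 / CP * exp (- (1 / (2 * s\<^sup>2)) * w\<^sup>2)"
    unfolding Gfun_def w_def y_def by simp
  have sq: "sqrt H * sqrt H = H" using Hp by simp
  show ?thesis
  proof
    assume "Gfun CP n s = \<epsilon>\<^sup>2"
    moreover have "2 / CP * exp (- L) = \<epsilon>\<^sup>2" unfolding expL using CP by simp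
    ultimately have "2 / CP * exp (- (1 / (2 * s\<^sup>2)) * w\<^sup>2) = 2 / CP * exp (- L)"
      using G by simp
    then have "exp (- (1 / (2 * s\<^sup>2)) * w\<^sup>2) = exp (- L)"
      using CP by simp
    then have "(1 / (2 * s\<^sup>2)) * w\<^sup>2 = L" by simp
    then have "w\<^sup>2 = (s * sqrt H)\<^sup>2" using s HL Hp by (simp add: field_simps power2_eq_square)
    then have ww: "w = s * sqrt H" using w(1) s Hp
      by (metis power2_eq_imp_eq real_sqrt_ge_zero mult_nonneg_nonneg less_imp_le)
    have "CP * n * s\<^sup>2 / (2 * exp (s\<^sup>2 / 2)) = s * sqrt H * exp (s * sqrt H)"
      using w(2) ww y_def by simp
    then show "n = nform CP (Hfun CP \<epsilon>) s"
      unfolding nform_def H_def[symmetric] using CP s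
      by (simp add: field_simps power2_eq_square)
  next
    assume nn: "n = nform CP (Hfun CP \<epsilon>) s"
    have "y = s * sqrt H * exp (s * sqrt H)"
      unfolding y_def nn nform_def H_def[symmetric] using CP s
      by (simp add: field_simps power2_eq_square)
    then have "w = s * sqrt H" using w_def lambertW_eq s Hp by simp
    then have "- (1 / (2 * s\<^sup>2)) * w\<^sup>2 = - L"
      using s HL Hp by (simp add: field_simps power2_eq_square)
    then show "Gfun CP n s = \<epsilon>\<^sup>2" using G expL CP by simp
  qed
qed

lemma B_form:
  assumes "s > 0" "CP > 0"
  shows "Bfun \<sigma>0 (nform CP H s) s = 2 * \<sigma>0\<^sup>2 * sqrt H / CP * (exp (s\<^sup>2 / 2 + s * sqrt H) / s ^ 3)"
  unfolding Bfun_def Nbar_def nform_def exp_add using assms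
  by (simp add: field_simps power2_eq_square power3_eq_cube)

lemma sstar:
  assumes "H > 0"
  shows "sigma_star H > 0" "(sigma_star H)\<^sup>2 + sqrt H * sigma_star H = 3"
proof -
  have "sqrt H < sqrt (H + 12)" by simp
  then show "sigma_star H > 0" unfolding sigma_star_def by simp
  have a: "sqrt (H+12) * sqrt (H+12) = H + 12" using assms by simp
  have b: "sqrt H * sqrt H = H" using assms by simp
  show "(sigma_star H)\<^sup>2 + sqrt H * sigma_star H = 3"
  proof -
    define x where "x = sqrt (H+12)"
    define y where "y = sqrt H"
    have "((x - y) / 2)\<^sup>2 + y * ((x - y) / 2) = (x * x - y * y) / 4"
      by (simp add: field_simps power2_eq_square)
    then show ?thesis unfolding sigma_star_def x_def y_def using a b by simp
  qed
qed

lemma aux_lin: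
  fixes a b c d :: real
  assumes "a - 3 * (b - 1) = c" "d \<le> b - 1" "0 \<le> c"
  shows "3 * d \<le> a"
  using assms by argo

lemma key_ineq:
  fixes q t s :: real
  assumes t: "t > 0" and s: "s > 0" and tq: "t\<^sup>2 + q * t = 3"
  shows "exp (t\<^sup>2 / 2 + t * q) / t ^ 3 \<le> exp (s\<^sup>2 / 2 + s * q) / s ^ 3"
proof -
  have l: "ln (s / t) \<le> s / t - 1" using s t by (intro ln_le_minus_one) simp
  have qq: "q = 3 / t - t" using tq t by (simp add: field_simps power2_eq_square)
  have "(s\<^sup>2 / 2 + s * q) - (t\<^sup>2 / 2 + t * q) - 3 * (s / t - 1) = (s - t)\<^sup>2 / 2"
    unfolding qq using t by (simp add: field_simps power2_eq_square)
  then have d: "3 * ln (s / t) \<le> (s\<^sup>2 / 2 + s * q) - (t\<^sup>2 / 2 + t * q)"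
    using l by (rule aux_lin) simp
  have "exp (3 * ln (s / t)) = exp (ln (s / t)) ^ 3"
    by (metis exp_of_nat_mult of_nat_numeral)
  then have "(s / t) ^ 3 = exp (3 * ln (s / t))" using s t by simp
  also have "\<dots> \<le> exp ((s\<^sup>2 / 2 + s * q) - (t\<^sup>2 / 2 + t * q))" using d by simp
  finally have "s ^ 3 / t ^ 3 \<le> exp (s\<^sup>2 / 2 + s * q) / exp (t\<^sup>2 / 2 + t * q)"
    by (simp add: exp_diff power_divide)
  then show ?thesis using s t by (simp add: field_simps)
qed

theorem proposition57:
  fixes \<sigma>0 CP \<epsilon> :: real
  assumes "\<sigma>0\<^sup>2 > 0" and "CP > 0" and "0 < \<epsilon>" and "\<epsilon> \<le> 1"
    and "Hfun CP \<epsilon> > 0"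
  shows
    "(\<exists>n\<^sub>s. n\<^sub>s > 0 \<and> Gfun CP n\<^sub>s (sigma_star (Hfun CP \<epsilon>)) = \<epsilon>\<^sup>2 \<and>
        (\<forall>n s. n > 0 \<longrightarrow> s > 0 \<longrightarrow> Gfun CP n s = \<epsilon>\<^sup>2 \<longrightarrow>
            Bfun \<sigma>0 n\<^sub>s (sigma_star (Hfun CP \<epsilon>)) \<le> Bfun \<sigma>0 n s))
     \<and> ((\<lambda>h. sqrt h * sigma_star h) \<longlongrightarrow> 3) at_top
     \<and> (Hfun CP \<epsilon> \<ge> 1 \<longrightarrow>
          (let s = 3 / sqrt (Hfun CP \<epsilon>); L = ln (2 / (CP * \<epsilon>\<^sup>2)) in
            (\<exists>n. n > 0 \<and> Gfun CP n s = \<epsilon>\<^sup>2) \<and>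
            (\<forall>n. n > 0 \<longrightarrow> Gfun CP n s = \<epsilon>\<^sup>2 \<longrightarrow>
               Nbar \<sigma>0 s = 2 / 9 * \<sigma>0\<^sup>2 * L \<and>
               n \<le> 4 * exp (15 / 2) / (3 * CP) * L \<and>
               Bfun \<sigma>0 n s \<le> 8 * \<sigma>0\<^sup>2 * exp (15 / 2) / (27 * CP) * L\<^sup>2)))"
proof (intro conjI)
  define H where "H = Hfun CP \<epsilon>"
  define L where "L = ln (2 / (CP * \<epsilon>\<^sup>2))"
  have HL: "H = 2 * L" unfolding H_def L_def Hfun_def by simp
  have Hp: "H > 0" using assms H_def by simp
  have CP: "CP > 0" using assms by simp
  have nfpos: "nform CP H s > 0" if "s > 0" for s
    unfolding nform_def using that Hp CP by simp
  define t where "t = sigma_star H"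
  have t: "t > 0" "t\<^sup>2 + sqrt H * t = 3" using sstar[OF Hp] t_def by auto
  show "\<exists>n\<^sub>s. n\<^sub>s > 0 \<and> Gfun CP n\<^sub>s (sigma_star (Hfun CP \<epsilon>)) = \<epsilon>\<^sup>2 \<and>
        (\<forall>n s. n > 0 \<longrightarrow> s > 0 \<longrightarrow> Gfun CP n s = \<epsilon>\<^sup>2 \<longrightarrow>
            Bfun \<sigma>0 n\<^sub>s (sigma_star (Hfun CP \<epsilon>)) \<le> Bfun \<sigma>0 n s)"
  proof (intro exI conjI allI impI)
    show "nform CP H t > 0" using nfpos t by simp
    show "Gfun CP (nform CP H t) (sigma_star (Hfun CP \<epsilon>)) = \<epsilon>\<^sup>2"
      using G_iff[of CP \<epsilon> "nform CP H t" t] assms nfpos t H_def t_def by simp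
    fix n s :: real assume n: "n > 0" and s: "s > 0" and g: "Gfun CP n s = \<epsilon>\<^sup>2"
    have nn: "n = nform CP H s" using G_iff[of CP \<epsilon> n s] assms n s g H_def by simp
    have c: "2 * \<sigma>0\<^sup>2 * sqrt H / CP \<ge> 0" using CP Hp by simp
    have "Bfun \<sigma>0 (nform CP H t) t \<le> Bfun \<sigma>0 (nform CP H s) s"
      unfolding B_form[OF t(1) CP] B_form[OF s CP]
      by (rule mult_left_mono[OF key_ineq[OF t(1) s t(2)] c])
    then show "Bfun \<sigma>0 (nform CP H t) (sigma_star (Hfun CP \<epsilon>)) \<le> Bfun \<sigma>0 n s"
      using nn t_def H_def by simp
  qed
  show "((\<lambda>h. sqrt h * sigma_star h) \<longlongrightarrow> 3) at_top"
    unfolding sigma_star_def by real_asymp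
  show "Hfun CP \<epsilon> \<ge> 1 \<longrightarrow>
          (let s = 3 / sqrt (Hfun CP \<epsilon>); L = ln (2 / (CP * \<epsilon>\<^sup>2)) in
            (\<exists>n. n > 0 \<and> Gfun CP n s = \<epsilon>\<^sup>2) \<and>
            (\<forall>n. n > 0 \<longrightarrow> Gfun CP n s = \<epsilon>\<^sup>2 \<longrightarrow>
               Nbar \<sigma>0 s = 2 / 9 * \<sigma>0\<^sup>2 * L \<and>
               n \<le> 4 * exp (15 / 2) / (3 * CP) * L \<and>
               Bfun \<sigma>0 n s \<le> 8 * \<sigma>0\<^sup>2 * exp (15 / 2) / (27 * CP) * L\<^sup>2))"
  proof (intro impI)
    assume H1: "Hfun CP \<epsilon> \<ge> 1"
    define s where "s = 3 / sqrt H"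
    have sp: "s > 0" using Hp s_def by simp
    have sqH: "sqrt H * sqrt H = H" using Hp by simp
    have s2: "s\<^sup>2 = 9 / H" unfolding s_def using Hp by (simp add: power2_eq_square)
    have ssq: "s * sqrt H = 3" unfolding s_def using Hp by simp
    have Nb: "Nbar \<sigma>0 s = 2 / 9 * \<sigma>0\<^sup>2 * L"
      unfolding Nbar_def s2 using Hp HL by (simp add: field_simps)
    have hs: "sqrt H / s = H / 3" unfolding s_def using sqH Hp by (simp add: field_simps)
    have "nform CP H s = 2 * exp (s\<^sup>2 / 2) * exp 3 * (sqrt H / s) / CP"
      unfolding nform_def ssq using sp by (simp add: field_simps)
    also have "\<dots> = 2 * exp (9 / (2 * H)) * exp 3 * (H / 3) / CP"
      unfolding hs s2 by simp
    also have "\<dots> = 4 * L * exp (3 + 9 / (2 * H)) / (3 * CP)"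
      unfolding exp_add HL by (simp add: field_simps)
    finally have nf: "nform CP H s = 4 * L * exp (3 + 9 / (2 * H)) / (3 * CP)" .
    have Lp: "L > 0" using Hp HL by simp
    have "9 / (2 * H) \<le> 9 / 2" using H1 H_def by (simp add: field_simps)
    then have "exp (3 + 9 / (2 * H)) \<le> exp (15 / 2)" by simp
    then have nle: "nform CP H s \<le> 4 * exp (15 / 2) / (3 * CP) * L"
      unfolding nf using Lp CP by (simp add: field_simps mult_left_mono)
    show "let s = 3 / sqrt (Hfun CP \<epsilon>); L = ln (2 / (CP * \<epsilon>\<^sup>2)) in
            (\<exists>n. n > 0 \<and> Gfun CP n s = \<epsilon>\<^sup>2) \<and>
            (\<forall>n. n > 0 \<longrightarrow> Gfun CP n s = \<epsilon>\<^sup>2 \<longrightarrow>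
               Nbar \<sigma>0 s = 2 / 9 * \<sigma>0\<^sup>2 * L \<and>
               n \<le> 4 * exp (15 / 2) / (3 * CP) * L \<and>
               Bfun \<sigma>0 n s \<le> 8 * \<sigma>0\<^sup>2 * exp (15 / 2) / (27 * CP) * L\<^sup>2)"
      unfolding Let_def H_def[symmetric] L_def[symmetric] s_def[symmetric]
    proof (intro conjI allI impI exI)
      show "nform CP H s > 0" using nfpos sp by simp
      show "Gfun CP (nform CP H s) s = \<epsilon>\<^sup>2"
        using G_iff[of CP \<epsilon> "nform CP H s" s] assms nfpos sp H_def by simp
      fix n assume n: "n > 0" and g: "Gfun CP n s = \<epsilon>\<^sup>2"
      have nn: "n = nform CP H s" using G_iff[of CP \<epsilon> n s] assms n sp g H_def by simp
      show "Nbar \<sigma>0 s = 2 / 9 * \<sigma>0\<^sup>2 * L" by (rule Nb)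
      show nle': "n \<le> 4 * exp (15 / 2) / (3 * CP) * L" using nn nle by simp
      have "Bfun \<sigma>0 n s = n * (2 / 9 * \<sigma>0\<^sup>2 * L)" unfolding Bfun_def Nb ..
      also have "\<dots> \<le> (4 * exp (15 / 2) / (3 * CP) * L) * (2 / 9 * \<sigma>0\<^sup>2 * L)"
        using nle' Lp assms(1) by (intro mult_right_mono) auto
      also have "\<dots> = 8 * \<sigma>0\<^sup>2 * exp (15 / 2) / (27 * CP) * L\<^sup>2"
        by (simp add: field_simps power2_eq_square)
      finally show "Bfun \<sigma>0 n s \<le> 8 * \<sigma>0\<^sup>2 * exp (15 / 2) / (27 * CP) * L\<^sup>2" .
    qed
  qed
qed

end
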